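(* In the setting described in the context, suppose $n\in\mathbb{N}$, $\omega,\upsilon\in\mathcal{P}_n$, $y\in T^n\omega\cap T^n\upsilon$, and $\mathcal{D}^n(\ell_\omega y)\mathcal{K}\pitchfork\mathcal{D}^n(\ell_\upsilon y)\mathcal{K}$. Then there exists a $1$-dimensional linear subspace $L\subset\mathbb{R}^d$ such that for all $v\in L\setminus\{0\}$, \[ |D(\tau_n\circ\ell_\omega)(y)v-D(\tau_n\circ\ell_\upsilon)(y)v|>C_5\big(|D\ell_\omega(y)v|+|D\ell_\upsilon(y)v|\big). \]
   Context: $X$ is a compact open subset of $\mathbb{R}^d$ (as in the paper). $T:X\to X$: finite partition $\mathcal{P}$ of a full-measure subset into connected open sets, $T|_\omega$ a $\mathcal{C}^1$ diffeomorphism onto $T\omega$ for $\omega\in\mathcal{P}$; $\|(DT^n(x))^{-1}\|\le e^{-\lambda n}$ (some $\lambda>0$). $\tau:X\to(0,\infty)$ is $\mathcal{C}^{1+\alpha}$ with $\|D\tau(x)(DT(x))^{-1}\|\le C_3$ for $x\in\omega\in\mathcal{P}$; $C_5=2C_3/(1-e^{-\lambda})$. $\mathcal{P}_n$ is the $n$-th refinement of $\mathcal{P}$; for $\omega\in\mathcal{P}_n$, $\ell_\omega=(T^n|_\omega)^{-1}:T^n\omega\to\omega$. $\tau_n=\sum_{j=0}^{n-1}\tau\circ T^j$. $\mathcal{D}^n(x)=\begin{pmatrix}DT^n(x)&0\\ D\tau_n(x)&1\end{pmatrix}$ acting on $\mathbb{R}^{d+1}$; $\mathcal{K}=\{(a,b):a\in\mathbb{R}^d,b\in\mathbb{R},|b|\le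 C_5|a|\}$. For $x_1,x_2$ with $T^nx_1=T^nx_2$, $\mathcal{D}^n(x_1)\mathcal{K}\pitchfork\mathcal{D}^n(x_2)\mathcal{K}$ means that $\mathcal{D}^n(x_1)\mathcal{K}\cap\mathcal{D}^n(x_2)\mathcal{K}$ contains no $d$-dimensional linear subspace. *)

theory Defs
  imports "HOL-Analysis.Analysis"
begin

definition refinement ::
  "(real^'d) set \<Rightarrow> (real^'d) set set \<Rightarrow> (real^'d \<Rightarrow> real^'d) \<Rightarrow> nat \<Rightarrow> (real^'d) set set" where
  "refinement X P T n = {A. A \<noteq> {} \<and> (\<exists>ws. length ws = n \<and> set ws \<subseteq> P \<and>
       A = {x\<in>X. \<forall>j<n. (T ^^ j) x \<in> ws ! j})}"

primrec DTpow ::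
  "(real^'d \<Rightarrow> real^'d) \<Rightarrow> (real^'d \<Rightarrow> real^'d^'d) \<Rightarrow> nat \<Rightarrow> real^'d \<Rightarrow> real^'d^'d" where
  "DTpow T DT 0 x = mat 1"
| "DTpow T DT (Suc n) x = DT ((T ^^ n) x) ** DTpow T DT n x"

definition tau_n :: "(real^'d \<Rightarrow> real^'d) \<Rightarrow> (real^'d \<Rightarrow> real) \<Rightarrow> nat \<Rightarrow> real^'d \<Rightarrow> real" where
  "tau_n T \<tau> n x = (\<Sum>j<n. \<tau> ((T ^^ j) x))"

definition Dtau_n ::
  "(real^'d \<Rightarrow> real^'d) \<Rightarrow> (real^'d \<Rightarrow> real^'d^'d) \<Rightarrow> (real^'d \<Rightarrow> real^'d) \<Rightarrow> nat \<Rightarrow> real^'d \<Rightarrow> real^'d" where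
  "Dtau_n T DT D\<tau> n x = (\<Sum>j<n. transpose (DTpow T DT j x) *v D\<tau> ((T ^^ j) x))"

text \<open>The linear map calD^n(x) on R^{d+1} = R^d x R: (a,b) |-> (DT^n(x) a, D tau_n(x) a + b).\<close>
definition calD ::
  "(real^'d \<Rightarrow> real^'d) \<Rightarrow> (real^'d \<Rightarrow> real^'d^'d) \<Rightarrow> (real^'d \<Rightarrow> real^'d) \<Rightarrow> nat \<Rightarrow> real^'d
     \<Rightarrow> ((real^'d) \<times> real) \<Rightarrow> ((real^'d) \<times> real)" where
  "calD T DT D\<tau> n x = (\<lambda>(a, b). (DTpow T DT n x *v a, Dtau_n T DT D\<tau> n x \<bullet> a + b))"

definition cone :: "real \<Rightarrow> ((real^'d) \<times> real) set" where
  "cone C = {(a, b). \<bar>b\<bar> \<le> C * norm a}"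

definition transversal ::
  "(real^'d \<Rightarrow> real^'d) \<Rightarrow> (real^'d \<Rightarrow> real^'d^'d) \<Rightarrow> (real^'d \<Rightarrow> real^'d) \<Rightarrow> real \<Rightarrow> nat
     \<Rightarrow> real^'d \<Rightarrow> real^'d \<Rightarrow> bool" where
  "transversal T DT D\<tau> C n x1 x2 \<longleftrightarrow>
     \<not> (\<exists>S. subspace S \<and> dim S = CARD('d) \<and>
          S \<subseteq> calD T DT D\<tau> n x1 ` cone C \<inter> calD T DT D\<tau> n x2 ` cone C)"

definition C1_diffeo_on ::
  "(real^'d \<Rightarrow> real^'d) \<Rightarrow> (real^'d \<Rightarrow> real^'d^'d) \<Rightarrow> (real^'d) set \<Rightarrow> bool" where
  "C1_diffeo_on T DT w \<longleftrightarrow> inj_on T w \<and> open (T ` w) \<and>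
     (\<forall>x\<in>w. (T has_derivative (\<lambda>h. DT x *v h)) (at x)) \<and> continuous_on w DT \<and>
     (\<exists>g Dg. (\<forall>x\<in>w. g (T x) = x) \<and>
        (\<forall>y\<in>T ` w. (g has_derivative (\<lambda>h. Dg y *v h)) (at y)) \<and> continuous_on (T ` w) Dg)"

definition ell :: "(real^'d \<Rightarrow> real^'d) \<Rightarrow> nat \<Rightarrow> (real^'d) set \<Rightarrow> real^'d \<Rightarrow> real^'d" where
  "ell T n w = the_inv_into w (T ^^ n)"

end

theory Submission imports Defs begin

lemma tdot: "inner (transpose A *v x) (y::real^'n) = inner x (A *v y)"
  by (simp add: dot_lmul_matrix)

lemma inv_deriv_mat:
  fixes T g :: "real^'d \<Rightarrow> real^'d"
  assumes "open w" "u \<in> w" "\<forall>x\<in>w. g (T x) = x"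
    and "(T has_derivative (\<lambda>h. A *v h)) (at u)"
    and "(g has_derivative (\<lambda>h. B *v h)) (at (T u))"
  shows "B ** A = mat 1"
proof -
  have "((g \<circ> T) has_derivative ((\<lambda>h. B *v h) \<circ> (\<lambda>h. A *v h))) (at u)"
    using assms(4,5) by (rule diff_chain_at)
  moreover have "((g \<circ> T) has_derivative id) (at u)"
    by (rule has_derivative_transform_within_open[OF has_derivative_id assms(1,2)])
       (use assms(3) in simp)
  ultimately have "((\<lambda>h. B *v h) \<circ> (\<lambda>h. A *v h)) = id"
    by (rule has_derivative_unique)
  then have "\<And>h. (B ** A) *v h = mat 1 *v h"
    by (metis comp_apply id_apply matrix_vector_mul_assoc matrix_vector_mul_lid)
  then show ?thesis by (simp add: matrix_eq)
qed

lemma funpow_deriv: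
  fixes T :: "real^'d \<Rightarrow> real^'d"
  assumes "\<forall>i<j. (T has_derivative (\<lambda>h. DT ((T^^i) x) *v h)) (at ((T^^i) x))"
  shows "((T^^j) has_derivative (\<lambda>h. DTpow T DT j x *v h)) (at x)"
  using assms
proof (induction j)
  case 0
  then show ?case by (simp add: has_derivative_id[unfolded id_def])
next
  case (Suc j)
  have "((T \<circ> (T^^j)) has_derivative ((\<lambda>h. DT ((T^^j) x) *v h) \<circ> (\<lambda>h. DTpow T DT j x *v h))) (at x)"
    using Suc by (intro diff_chain_at) auto
  then show ?case by (simp add: o_def matrix_vector_mul_assoc)
qed

lemma funpow_inj:
  fixes T :: "real^'d \<Rightarrow> real^'d"
  assumes "\<forall>w\<in>set ws. inj_on T w"
  shows "inj_on (T^^length ws) {x\<in>X. \<forall>j<length ws. (T^^j) x \<in> ws!j}"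
  using assms
proof (induction ws rule: rev_induct)
  case Nil
  then show ?case by simp
next
  case (snoc w ws)
  show ?case
  proof (rule inj_onI)
    fix x x' assume x: "x \<in> {x\<in>X. \<forall>j<length (ws@[w]). (T^^j) x \<in> (ws@[w])!j}"
      and x': "x' \<in> {x\<in>X. \<forall>j<length (ws@[w]). (T^^j) x \<in> (ws@[w])!j}"
      and eq: "(T^^length (ws@[w])) x = (T^^length (ws@[w])) x'"
    let ?k = "length ws"
    have xo: "x \<in> {x\<in>X. \<forall>j<length ws. (T^^j) x \<in> ws!j}" using x by (auto simp: nth_append) (metis less_SucI)
    have xo': "x' \<in> {x\<in>X. \<forall>j<length ws. (T^^j) x \<in> ws!j}" using x' by (auto simp: nth_append) (metis less_SucI)
    have u: "(T^^?k) x \<in> w" using x by (auto simp: nth_append dest: spec[of _ ?k])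
    have u': "(T^^?k) x' \<in> w" using x' by (auto simp: nth_append dest: spec[of _ ?k])
    have "T ((T^^?k) x) = T ((T^^?k) x')" using eq by simp
    then have "(T^^?k) x = (T^^?k) x'"
      using snoc.prems u u' by (auto dest: inj_onD)
    then show "x = x'" using snoc.IH snoc.prems xo xo' by (auto dest: inj_onD)
  qed
qed

lemma branch_inverse:
  fixes T :: "real^'d \<Rightarrow> real^'d"
  assumes "open X" "\<forall>w\<in>set ws. open w \<and> C1_diffeo_on T DT w"
    and "x \<in> {x\<in>X. \<forall>j<length ws. (T^^j) x \<in> ws!j}"
  shows "\<exists>N G M. open N \<and> (T^^length ws) x \<in> N \<and>
           (G has_derivative (\<lambda>h. M *v h)) (at ((T^^length ws) x)) \<and>
           M ** DTpow T DT (length ws) x = mat 1 \<and>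
           (\<forall>z\<in>N. G z \<in> {x\<in>X. \<forall>j<length ws. (T^^j) x \<in> ws!j} \<and> (T^^length ws) (G z) = z)"
  using assms(2,3)
proof (induction ws arbitrary: x rule: rev_induct)
  case Nil
  show ?case
    by (rule exI[of _ X], rule exI[of _ id], rule exI[of _ "mat 1"])
       (use Nil assms(1) in \<open>auto simp: has_derivative_id[unfolded id_def]\<close>)
next
  case (snoc w ws)
  let ?k = "length ws"
  let ?O = "{x\<in>X. \<forall>j<length ws. (T^^j) x \<in> ws!j}"
  have xo: "x \<in> ?O" using snoc.prems(2) by (auto simp: nth_append) (metis less_SucI)
  have u: "(T^^?k) x \<in> w" using snoc.prems(2) by (auto simp: nth_append dest: spec[of _ ?k])
  have ow: "open w" and dw: "C1_diffeo_on T DT w" using snoc.prems(1) by auto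
  obtain N G M where N: "open N" "(T^^?k) x \<in> N"
    and G: "(G has_derivative (\<lambda>h. M *v h)) (at ((T^^?k) x))"
    and M: "M ** DTpow T DT ?k x = mat 1"
    and NG: "\<forall>z\<in>N. G z \<in> ?O \<and> (T^^?k) (G z) = z"
    using snoc.IH[OF _ xo] snoc.prems(1) by auto
  from dw obtain g Dg where inj: "inj_on T w" and oTw: "open (T ` w)"
    and Td: "\<forall>x\<in>w. (T has_derivative (\<lambda>h. DT x *v h)) (at x)"
    and gT: "\<forall>x\<in>w. g (T x) = x"
    and gd: "\<forall>y\<in>T ` w. (g has_derivative (\<lambda>h. Dg y *v h)) (at y)"
    unfolding C1_diffeo_on_def by blast
  let ?u = "(T^^?k) x"
  have gcont: "continuous_on (T ` w) g"
    using gd by (intro continuous_at_imp_continuous_on) (auto dest: has_derivative_continuous)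
  define N' where "N' = g -` (N \<inter> w) \<inter> T ` w"
  have oN': "open N'"
    using gcont oTw N(1) ow unfolding N'_def by (meson continuous_on_open_vimage open_Int)
  have Tu: "T ?u \<in> N'" using u gT N(2) unfolding N'_def by auto
  have eqk: "(T^^length (ws@[w])) x = T ?u" by simp
  have gdu: "(g has_derivative (\<lambda>h. Dg (T ?u) *v h)) (at (T ?u))" using gd u by auto
  have Gdu: "(G has_derivative (\<lambda>h. M *v h)) (at (g (T ?u)))" using G gT u by simp
  have "((G \<circ> g) has_derivative ((\<lambda>h. M *v h) \<circ> (\<lambda>h. Dg (T ?u) *v h))) (at (T ?u))"
    using gdu Gdu by (rule diff_chain_at)
  then have der: "((G \<circ> g) has_derivative (\<lambda>h. (M ** Dg (T ?u)) *v h)) (at (T ?u))"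
    by (simp add: o_def matrix_vector_mul_assoc)
  have inv1: "Dg (T ?u) ** DT ?u = mat 1"
    using inv_deriv_mat[OF ow u] gT Td u gdu by blast
  have "(M ** Dg (T ?u)) ** DTpow T DT (length (ws@[w])) x = M ** (Dg (T ?u) ** DT ?u) ** DTpow T DT ?k x"
    by (simp add: matrix_mul_assoc)
  also have "\<dots> = mat 1" using inv1 M by simp
  finally have Mi: "(M ** Dg (T ?u)) ** DTpow T DT (length (ws@[w])) x = mat 1" .
  have NG': "\<forall>z\<in>N'. (G \<circ> g) z \<in> {x\<in>X. \<forall>j<length (ws@[w]). (T^^j) x \<in> (ws@[w])!j}
              \<and> (T^^length (ws@[w])) ((G \<circ> g) z) = z"
  proof
    fix z assume z: "z \<in> N'"
    then obtain v where v: "v \<in> w" "z = T v" unfolding N'_def by auto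
    have gz: "g z = v" using v gT by simp
    have vN: "v \<in> N" using z gz unfolding N'_def by auto
    have GO: "G v \<in> ?O" and TG: "(T^^?k) (G v) = v" using NG vN by auto
    have "\<forall>j<Suc ?k. (T^^j) (G v) \<in> (ws@[w])!j"
    proof (intro allI impI)
      fix j assume "j < Suc ?k"
      then show "(T^^j) (G v) \<in> (ws@[w])!j"
        using GO TG v(1) by (cases "j < ?k") (auto simp: nth_append less_Suc_eq)
    qed
    then show "(G \<circ> g) z \<in> {x\<in>X. \<forall>j<length (ws@[w]). (T^^j) x \<in> (ws@[w])!j}
              \<and> (T^^length (ws@[w])) ((G \<circ> g) z) = z"
      using GO TG gz v by simp
  qed
  show ?case
    unfolding eqk
    by (rule exI[of _ N'], rule exI[of _ "G \<circ> g"], rule exI[of _ "M ** Dg (T ?u)"])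
       (use oN' Tu der Mi NG' in blast)
qed

lemma branch_all:
  fixes T :: "real^'d \<Rightarrow> real^'d"
  assumes X: "open X"
    and P_sub: "\<forall>w\<in>P. w \<noteq> {} \<and> open w \<and> connected w \<and> w \<subseteq> X"
    and T_diffeo: "\<forall>w\<in>P. C1_diffeo_on T DT w"
    and tau_deriv: "\<forall>x\<in>X. (\<tau> has_derivative (\<lambda>h. D\<tau> x \<bullet> h)) (at x)"
    and \<omega>: "\<omega> \<in> refinement X P T n" and x: "x \<in> \<omega>"
  shows "ell T n \<omega> ((T^^n) x) = x \<and> (\<exists>M. M ** DTpow T DT n x = mat 1 \<and>
     (ell T n \<omega> has_derivative (\<lambda>h. M *v h)) (at ((T^^n) x)) \<and>
     ((tau_n T \<tau> n \<circ> ell T n \<omega>) has_derivative (\<lambda>h. Dtau_n T DT D\<tau> n x \<bullet> (M *v h))) (at ((T^^n) x)))"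
proof -
  obtain ws where ws: "length ws = n" "set ws \<subseteq> P" "\<omega> = {x\<in>X. \<forall>j<n. (T^^j) x \<in> ws!j}"
    using \<omega> unfolding refinement_def by auto
  have inj: "inj_on (T^^n) \<omega>"
    using funpow_inj[of ws T X] ws T_diffeo unfolding C1_diffeo_on_def by auto
  have ellx: "ell T n \<omega> ((T^^n) x) = x"
    unfolding ell_def using inj x by (simp add: the_inv_into_f_f)
  obtain N G M where N: "open N" "(T^^n) x \<in> N"
    and G: "(G has_derivative (\<lambda>h. M *v h)) (at ((T^^n) x))"
    and M: "M ** DTpow T DT n x = mat 1"
    and NG: "\<forall>z\<in>N. G z \<in> \<omega> \<and> (T^^n) (G z) = z"
  proof -
    have a: "\<forall>w\<in>set ws. open w \<and> C1_diffeo_on T DT w" using ws(2) P_sub T_diffeo by blast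
    have b: "x \<in> {x\<in>X. \<forall>j<length ws. (T^^j) x \<in> ws!j}" using x ws by simp
    show ?thesis using branch_inverse[OF X a b] that ws by auto
  qed
  have ellG: "(ell T n \<omega> has_derivative (\<lambda>h. M *v h)) (at ((T^^n) x))"
  proof (rule has_derivative_transform_within_open[OF G N])
    fix z assume "z \<in> N"
    then show "G z = ell T n \<omega> z" unfolding ell_def using NG inj
      by (metis the_inv_into_f_eq)
  qed
  have Tj: "(T^^j) x \<in> ws!j" if "j < n" for j using x ws that by auto
  have wsP: "ws!j \<in> P" if "j < n" for j using ws that by auto
  have Tdj: "((T^^j) has_derivative (\<lambda>h. DTpow T DT j x *v h)) (at x)" if "j < n" for j
  proof (rule funpow_deriv, intro allI impI)
    fix i assume "i < j"
    then have "i < n" using that by simp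
    then show "(T has_derivative (\<lambda>h. DT ((T^^i) x) *v h)) (at ((T^^i) x))"
      using Tj[of i] wsP[of i] T_diffeo unfolding C1_diffeo_on_def by blast
  qed
  have tj: "((\<lambda>y. \<tau> ((T^^j) y)) has_derivative
      (\<lambda>h. D\<tau> ((T^^j) x) \<bullet> (DTpow T DT j x *v h))) (at x)" if "j < n" for j
  proof -
    have "(T^^j) x \<in> X" using Tj[OF that] wsP[OF that] P_sub by blast
    then have "(\<tau> has_derivative (\<lambda>h. D\<tau> ((T^^j) x) \<bullet> h)) (at ((T^^j) x))"
      using tau_deriv by blast
    from diff_chain_at[OF Tdj[OF that] this] show ?thesis by (simp add: o_def)
  qed
  have "((\<lambda>y. \<Sum>j<n. \<tau> ((T^^j) y)) has_derivative
      (\<lambda>h. \<Sum>j<n. D\<tau> ((T^^j) x) \<bullet> (DTpow T DT j x *v h))) (at x)"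
    by (rule has_derivative_sum) (use tj in auto)
  moreover have "(\<lambda>h. \<Sum>j<n. D\<tau> ((T^^j) x) \<bullet> (DTpow T DT j x *v h)) = (\<lambda>h. Dtau_n T DT D\<tau> n x \<bullet> h)"
    unfolding Dtau_n_def by (simp add: inner_sum_left dot_lmul_matrix)
  ultimately have taud: "(tau_n T \<tau> n has_derivative (\<lambda>h. Dtau_n T DT D\<tau> n x \<bullet> h)) (at x)"
    unfolding tau_n_def[abs_def] by simp
  have taud': "(tau_n T \<tau> n has_derivative (\<lambda>h. Dtau_n T DT D\<tau> n x \<bullet> h)) (at (ell T n \<omega> ((T^^n) x)))"
    using taud ellx by simp
  have "((tau_n T \<tau> n \<circ> ell T n \<omega>) has_derivative ((\<lambda>h. Dtau_n T DT D\<tau> n x \<bullet> h) \<circ> (\<lambda>h. M *v h))) (at ((T^^n) x))"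
    using ellG taud' by (rule diff_chain_at)
  then show ?thesis using ellx M ellG by (auto simp: o_def)
qed

lemma lin_alg:
  fixes A1 A2 M1 M2 :: "real^'d^'d" and g1 g2 :: "real^'d" and C :: real
  assumes M1: "M1 ** A1 = mat 1" and M2: "M2 ** A2 = mat 1"
    and tr: "\<not> (\<exists>S. subspace S \<and> dim S = CARD('d) \<and>
          S \<subseteq> (\<lambda>(a, b). (A1 *v a, g1 \<bullet> a + b)) ` cone C \<inter> (\<lambda>(a, b). (A2 *v a, g2 \<bullet> a + b)) ` cone C)"
  shows "\<exists>w. w \<noteq> 0 \<and> \<bar>g1 \<bullet> (M1 *v w) - g2 \<bullet> (M2 *v w)\<bar> > C * (norm (M1 *v w) + norm (M2 *v w))"
proof -
  have AM1: "A1 ** M1 = mat 1" using M1 matrix_left_right_inverse by blast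
  have AM2: "A2 ** M2 = mat 1" using M2 matrix_left_right_inverse by blast
  have AMv1: "A1 *v (M1 *v w) = w" for w using AM1 by (simp add: matrix_vector_mul_assoc)
  have AMv2: "A2 *v (M2 *v w) = w" for w using AM2 by (simp add: matrix_vector_mul_assoc)
  show ?thesis
  proof (cases "C < 0")
    case True
    let ?w = "vec 1 :: real^'d"
    have w0: "?w \<noteq> 0" by (simp add: vec_eq_iff)
    have "M1 *v ?w \<noteq> 0" using AMv1[of ?w] w0 by auto
    then have "norm (M1 *v ?w) + norm (M2 *v ?w) > 0"
      by (simp add: add_pos_nonneg)
    then have "C * (norm (M1 *v ?w) + norm (M2 *v ?w)) < 0" using True by (simp add: mult_neg_pos)
    then show ?thesis using w0 by (intro exI[of _ ?w]) auto
  next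
    case False
    then have C0: "C \<ge> 0" by simp
    define e where "e = transpose M2 *v g2 - transpose M1 *v g1"
    define K where "K = (\<Union>x\<in>(\<lambda>z. transpose M1 *v z) ` cball 0 C. \<Union>y\<in>(\<lambda>z. transpose M2 *v z) ` cball 0 C. {x + y})"
    have ew: "e \<bullet> w = g2 \<bullet> (M2 *v w) - g1 \<bullet> (M1 *v w)" for w
      unfolding e_def by (simp add: inner_diff_left dot_lmul_matrix)
    show ?thesis
    proof (cases "e \<in> K")
      case True
      then obtain z1 z2 where z: "norm z1 \<le> C" "norm z2 \<le> C" "e = transpose M1 *v z1 + transpose M2 *v z2"
        unfolding K_def by (auto simp: dist_norm)
      have ez: "e \<bullet> w = z1 \<bullet> (M1 *v w) + z2 \<bullet> (M2 *v w)" for w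
        unfolding z(3) by (simp add: inner_add_left dot_lmul_matrix)
      define u where "u = transpose M1 *v (g1 + z1)"
      have uw: "u \<bullet> w = g1 \<bullet> (M1 *v w) + z1 \<bullet> (M1 *v w)" for w
        unfolding u_def by (simp add: dot_lmul_matrix inner_add_left)
      define f where "f = (\<lambda>w::real^'d. (w, u \<bullet> w))"
      have lf: "linear f" unfolding f_def
        by (rule linearI) (auto simp: inner_add_right)
      have inj: "inj_on f X" for X unfolding f_def by (auto intro: inj_onI)
      have sub: "subspace (range f)" unfolding subspace_def f_def
        by (auto simp: image_iff inner_add_right zero_prod_def)
      have dimS: "dim (range f) = CARD('d)"
        using dim_image_eq[OF lf inj, of UNIV] by simp
      have in1: "f w \<in> (\<lambda>(a, b). (A1 *v a, g1 \<bullet> a + b)) ` cone C" for w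
      proof (rule rev_image_eqI[of "(M1 *v w, z1 \<bullet> (M1 *v w))"])
        have "\<bar>z1 \<bullet> (M1 *v w)\<bar> \<le> norm z1 * norm (M1 *v w)" by (rule Cauchy_Schwarz_ineq2)
        also have "\<dots> \<le> C * norm (M1 *v w)" using z(1) by (simp add: mult_right_mono)
        finally show "(M1 *v w, z1 \<bullet> (M1 *v w)) \<in> cone C" unfolding cone_def by simp
        show "f w = (\<lambda>(a, b). (A1 *v a, g1 \<bullet> a + b)) (M1 *v w, z1 \<bullet> (M1 *v w))"
          unfolding f_def using AMv1 uw by simp
      qed
      have in2: "f w \<in> (\<lambda>(a, b). (A2 *v a, g2 \<bullet> a + b)) ` cone C" for w
      proof (rule rev_image_eqI[of "(M2 *v w, - (z2 \<bullet> (M2 *v w)))"])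
        have "\<bar>z2 \<bullet> (M2 *v w)\<bar> \<le> norm z2 * norm (M2 *v w)" by (rule Cauchy_Schwarz_ineq2)
        also have "\<dots> \<le> C * norm (M2 *v w)" using z(2) by (simp add: mult_right_mono)
        finally show "(M2 *v w, - (z2 \<bullet> (M2 *v w))) \<in> cone C" unfolding cone_def by simp
        have "u \<bullet> w = g2 \<bullet> (M2 *v w) + - (z2 \<bullet> (M2 *v w))"
          using uw[of w] ez[of w] ew[of w] by linarith
        then show "f w = (\<lambda>(a, b). (A2 *v a, g2 \<bullet> a + b)) (M2 *v w, - (z2 \<bullet> (M2 *v w)))"
          unfolding f_def using AMv2 by simp
      qed
      have "range f \<subseteq> (\<lambda>(a, b). (A1 *v a, g1 \<bullet> a + b)) ` cone C \<inter> (\<lambda>(a, b). (A2 *v a, g2 \<bullet> a + b)) ` cone C"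
        using in1 in2 by blast
      then show ?thesis using tr sub dimS by blast
    next
      case False
      have cK: "convex K" unfolding K_def
        by (intro convex_sums convex_linear_image matrix_vector_mul_linear convex_cball)
      have kK: "compact K" unfolding K_def
        by (intro compact_sums' compact_continuous_image linear_continuous_on matrix_vector_mul_bounded_linear compact_cball)
      obtain a b where ab: "a \<bullet> e < b" "\<forall>x\<in>K. b < a \<bullet> x"
        using separating_hyperplane_closed_point[OF cK compact_imp_closed[OF kK] False] by blast
      define z1 where "z1 = - (C / norm (M1 *v a)) *\<^sub>R (M1 *v a)"
      define z2 where "z2 = - (C / norm (M2 *v a)) *\<^sub>R (M2 *v a)"
      have nz1: "norm z1 \<le> C" unfolding z1_def using C0
        by (cases "M1 *v a = 0") auto
      have nz2: "norm z2 \<le> C" unfolding z2_def using C0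
        by (cases "M2 *v a = 0") auto
      have d1: "z1 \<bullet> (M1 *v a) = - C * norm (M1 *v a)" unfolding z1_def
        by (cases "M1 *v a = 0") (auto simp: power2_norm_eq_inner[symmetric] power2_eq_square)
      have d2: "z2 \<bullet> (M2 *v a) = - C * norm (M2 *v a)" unfolding z2_def
        by (cases "M2 *v a = 0") (auto simp: power2_norm_eq_inner[symmetric] power2_eq_square)
      have "transpose M1 *v z1 + transpose M2 *v z2 \<in> K"
      proof -
        have "transpose M1 *v z1 \<in> (\<lambda>z. transpose M1 *v z) ` cball 0 C" using nz1 by auto
        moreover have "transpose M2 *v z2 \<in> (\<lambda>z. transpose M2 *v z) ` cball 0 C" using nz2 by auto
        ultimately show ?thesis unfolding K_def by blast
      qed
      then have "b < a \<bullet> (transpose M1 *v z1 + transpose M2 *v z2)" using ab by blast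
      also have "a \<bullet> (transpose M1 *v z1 + transpose M2 *v z2) = z1 \<bullet> (M1 *v a) + z2 \<bullet> (M2 *v a)"
        by (simp add: inner_add_right inner_commute[of a] dot_lmul_matrix)
      finally have "a \<bullet> e < - C * norm (M1 *v a) - C * norm (M2 *v a)" using ab(1) d1 d2 by simp
      then have ineq: "g1 \<bullet> (M1 *v a) - g2 \<bullet> (M2 *v a) > C * (norm (M1 *v a) + norm (M2 *v a))"
        using ew[of a] inner_commute[of a e] by (simp add: algebra_simps)
      have a0: "a \<noteq> 0"
      proof
        assume "a = 0"
        then show False using ineq C0 by simp
      qed
      show ?thesis using ineq a0 by (intro exI[of _ a]) auto
    qed
  qed
qed

theorem lemma3p7:
  fixes X :: "(real^'d) set" and P :: "(real^'d) set set"
    and T :: "real^'d \<Rightarrow> real^'d" and DT :: "real^'d \<Rightarrow> real^'d^'d"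
    and \<tau> :: "real^'d \<Rightarrow> real" and D\<tau> :: "real^'d \<Rightarrow> real^'d"
    and lam \<alpha> C3 C5 :: real and n :: nat and \<omega> \<upsilon> :: "(real^'d) set" and y :: "real^'d"
  assumes X: "open X" "bounded X"
    and TX: "\<forall>x\<in>X. T x \<in> X"
    and P_fin: "finite P" and P_disj: "disjoint P"
    and P_sub: "\<forall>w\<in>P. w \<noteq> {} \<and> open w \<and> connected w \<and> w \<subseteq> X"
    and P_full: "X - \<Union>P \<in> null_sets lebesgue"
    and T_diffeo: "\<forall>w\<in>P. C1_diffeo_on T DT w"
    and lam: "lam > 0"
    and expand: "\<forall>m. \<forall>w\<in>refinement X P T m. \<forall>x\<in>w. \<forall>v.
                   norm (matrix_inv (DTpow T DT m x) *v v) \<le> exp (- lam * real m) * norm v"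
    and tau_pos: "\<forall>x\<in>X. \<tau> x > 0"
    and tau_deriv: "\<forall>x\<in>X. (\<tau> has_derivative (\<lambda>h. D\<tau> x \<bullet> h)) (at x)"
    and alpha: "0 < \<alpha>" "\<alpha> \<le> 1"
    and tau_hoelder: "\<exists>H. \<forall>x\<in>X. \<forall>x'\<in>X. norm (D\<tau> x - D\<tau> x') \<le> H * dist x x' powr \<alpha>"
    and C3: "\<forall>w\<in>P. \<forall>x\<in>w. \<forall>v. \<bar>D\<tau> x \<bullet> (matrix_inv (DT x) *v v)\<bar> \<le> C3 * norm v"
    and C5: "C5 = 2 * C3 / (1 - exp (- lam))"
    and \<omega>: "\<omega> \<in> refinement X P T n" and \<upsilon>: "\<upsilon> \<in> refinement X P T n"
    and y: "y \<in> (T ^^ n) ` \<omega> \<inter> (T ^^ n) ` \<upsilon>"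
    and transv: "transversal T DT D\<tau> C5 n (ell T n \<omega> y) (ell T n \<upsilon> y)"
  shows "\<exists>L :: (real^'d) set. subspace L \<and> dim L = 1 \<and>
           (\<forall>v\<in>L - {0}.
              \<bar>frechet_derivative (tau_n T \<tau> n \<circ> ell T n \<omega>) (at y) v
               - frechet_derivative (tau_n T \<tau> n \<circ> ell T n \<upsilon>) (at y) v\<bar>
              > C5 * (norm (frechet_derivative (ell T n \<omega>) (at y) v)
                      + norm (frechet_derivative (ell T n \<upsilon>) (at y) v)))"
proof -
  obtain x1 where x1: "x1 \<in> \<omega>" "(T^^n) x1 = y" using y by auto
  obtain x2 where x2: "x2 \<in> \<upsilon>" "(T^^n) x2 = y" using y by auto
  obtain M1 where e1: "ell T n \<omega> y = x1" and M1: "M1 ** DTpow T DT n x1 = mat 1"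
    and ld1: "(ell T n \<omega> has_derivative (\<lambda>h. M1 *v h)) (at y)"
    and td1: "((tau_n T \<tau> n \<circ> ell T n \<omega>) has_derivative (\<lambda>h. Dtau_n T DT D\<tau> n x1 \<bullet> (M1 *v h))) (at y)"
    using branch_all[OF X(1) P_sub T_diffeo tau_deriv \<omega> x1(1)] x1(2) by auto
  obtain M2 where e2: "ell T n \<upsilon> y = x2" and M2: "M2 ** DTpow T DT n x2 = mat 1"
    and ld2: "(ell T n \<upsilon> has_derivative (\<lambda>h. M2 *v h)) (at y)"
    and td2: "((tau_n T \<tau> n \<circ> ell T n \<upsilon>) has_derivative (\<lambda>h. Dtau_n T DT D\<tau> n x2 \<bullet> (M2 *v h))) (at y)"
    using branch_all[OF X(1) P_sub T_diffeo tau_deriv \<upsilon> x2(1)] x2(2) by auto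
  have f1: "frechet_derivative (ell T n \<omega>) (at y) = (\<lambda>h. M1 *v h)"
    using frechet_derivative_at[OF ld1] by simp
  have f2: "frechet_derivative (ell T n \<upsilon>) (at y) = (\<lambda>h. M2 *v h)"
    using frechet_derivative_at[OF ld2] by simp
  have f3: "frechet_derivative (tau_n T \<tau> n \<circ> ell T n \<omega>) (at y) = (\<lambda>h. Dtau_n T DT D\<tau> n x1 \<bullet> (M1 *v h))"
    using frechet_derivative_at[OF td1] by simp
  have f4: "frechet_derivative (tau_n T \<tau> n \<circ> ell T n \<upsilon>) (at y) = (\<lambda>h. Dtau_n T DT D\<tau> n x2 \<bullet> (M2 *v h))"
    using frechet_derivative_at[OF td2] by simp
  have tr: "\<not> (\<exists>S. subspace S \<and> dim S = CARD('d) \<and>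
          S \<subseteq> (\<lambda>(a, b). (DTpow T DT n x1 *v a, Dtau_n T DT D\<tau> n x1 \<bullet> a + b)) ` cone C5 \<inter>
               (\<lambda>(a, b). (DTpow T DT n x2 *v a, Dtau_n T DT D\<tau> n x2 \<bullet> a + b)) ` cone C5)"
    using transv unfolding transversal_def calD_def e1 e2 .
  obtain w where w0: "w \<noteq> 0" and wineq:
    "\<bar>Dtau_n T DT D\<tau> n x1 \<bullet> (M1 *v w) - Dtau_n T DT D\<tau> n x2 \<bullet> (M2 *v w)\<bar>
       > C5 * (norm (M1 *v w) + norm (M2 *v w))"
    using lin_alg[OF M1 M2 tr] by blast
  show ?thesis
  proof (intro exI[of _ "span {w}"] conjI ballI)
    show "subspace (span {w})" by (rule subspace_span)
    show "dim (span {w}) = 1" using w0 by simp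
  next
    fix v assume v: "v \<in> span {w} - {0}"
    then obtain t where t: "v = t *\<^sub>R w" by (auto simp: span_singleton)
    have t0: "t \<noteq> 0" using v t by auto
    have "\<bar>t\<bar> * (C5 * (norm (M1 *v w) + norm (M2 *v w)))
        < \<bar>t\<bar> * \<bar>Dtau_n T DT D\<tau> n x1 \<bullet> (M1 *v w) - Dtau_n T DT D\<tau> n x2 \<bullet> (M2 *v w)\<bar>"
      using wineq t0 by (intro mult_strict_left_mono) auto
    then show "\<bar>frechet_derivative (tau_n T \<tau> n \<circ> ell T n \<omega>) (at y) v
               - frechet_derivative (tau_n T \<tau> n \<circ> ell T n \<upsilon>) (at y) v\<bar>
              > C5 * (norm (frechet_derivative (ell T n \<omega>) (at y) v)
                      + norm (frechet_derivative (ell T n \<upsilon>) (at y) v))"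
      unfolding f1 f2 f3 f4 t
      by (simp add: matrix_vector_mult_scaleR abs_mult[symmetric] right_diff_distrib algebra_simps)
  qed
qed

end
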